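(* Let $M$ be a $3\times 3$ integer matrix, all of whose eigenvalues have modulus $>1$, let $m=|\det M|$, and let $T\subset\mathbb R^3$ be a self-affine lattice tile with respect to $M$ (and some standard digit set). If $T$ is conjugate to a self-similar tile, then at least one of the following holds: (i) $m$ is the cube of an integer; in particular $m\ge 8$; (ii) there is $s\in\{+1,-1\}$ such that $M$ is similar over $\mathbb R$ to the matrix $\begin{pmatrix}0&0&s\,m\\1&0&0\\0&1&0\end{pmatrix}$ (equivalently, the characteristic polynomial of $M$ is $\lambda^3-s\,m$).
   Context: A self-affine lattice tile with respect to an integer expanding matrix $M$ (all eigenvalues of modulus $>1$) is the unique nonempty compact set $T$ with $MT=\bigcup_{j=1}^m (T+k_j)$, where $m=|\det M|$ and $\{k_1,\dots,k_m\}\subset\mathbb Z^3$ is a complete set of residues of $\mathbb Z^3$ modulo $M\mathbb Z^3$ (a standard digit set). $T$ is conjugate to a self-similar tile if there is an invertible linear map $h$ of $\mathbb R^3$ such that $hMh^{-1}$ is a positive multiple of an orthogonal map; in that case all eigenvalues of $M$ have the same modulus. *)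

theory Defs
  imports "HOL-Analysis.Analysis"
begin

definition int_vec :: "real^3 \<Rightarrow> bool" where
  "int_vec v \<longleftrightarrow> (\<forall>i. v $ i \<in> \<int>)"

definition int_matrix :: "real^3^3 \<Rightarrow> bool" where
  "int_matrix M \<longleftrightarrow> (\<forall>i j. M $ i $ j \<in> \<int>)"

definition complex_eigenvalue :: "real^3^3 \<Rightarrow> complex \<Rightarrow> bool" where
  "complex_eigenvalue M z \<longleftrightarrow> det (mat z - map_matrix complex_of_real M) = 0"

definition expanding :: "real^3^3 \<Rightarrow> bool" where
  "expanding M \<longleftrightarrow> (\<forall>z. complex_eigenvalue M z \<longrightarrow> norm z > 1)"

definition standard_digit_set :: "real^3^3 \<Rightarrow> (real^3) set \<Rightarrow> bool" where
  "standard_digit_set M D \<longleftrightarrow>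
     finite D \<and> card D = nat \<lfloor>\<bar>det M\<bar>\<rfloor> \<and> (\<forall>d\<in>D. int_vec d) \<and>
     (\<forall>z. int_vec z \<longrightarrow> (\<exists>!d\<in>D. \<exists>w. int_vec w \<and> z - d = M *v w))"

definition self_affine_lattice_tile :: "real^3^3 \<Rightarrow> (real^3) set \<Rightarrow> bool" where
  "self_affine_lattice_tile M T \<longleftrightarrow>
     (\<exists>D. standard_digit_set M D \<and> T \<noteq> {} \<and> compact T \<and>
          (\<lambda>x. M *v x) ` T = (\<Union>d\<in>D. (\<lambda>x. x + d) ` T))"

definition conjugate_to_self_similar :: "real^3^3 \<Rightarrow> (real^3) set \<Rightarrow> bool" where
  "conjugate_to_self_similar M T \<longleftrightarrow>
     (\<exists>h::real^3^3. \<exists>c::real. \<exists>Q::real^3^3. invertible h \<and> c > 0 \<and> orthogonal_matrix Q \<and>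
        h ** M ** matrix_inv h = c *\<^sub>R Q)"

definition similar_over_reals :: "real^3^3 \<Rightarrow> real^3^3 \<Rightarrow> bool" where
  "similar_over_reals A B \<longleftrightarrow> (\<exists>P::real^3^3. invertible P \<and> A = P ** B ** matrix_inv P)"

definition comp_matrix :: "real \<Rightarrow> real^3^3" where
  "comp_matrix a = vector [vector [0, 0, a], vector [1, 0, 0], vector [0, 1, 0]]"

end

theory Submission
  imports Defs
begin

lemma det_scale3: "det (k *\<^sub>R (A::real^3^3)) = k^3 * det A"
  unfolding det_3 by (simp add: algebra_simps power3_eq_cube)

lemma minv: assumes "invertible (h::real^'n^'n)"
  shows "h ** matrix_inv h = mat 1" "matrix_inv h ** h = mat 1"
proof -
  have "\<exists>A'. h ** A' = mat 1 \<and> A' ** h = mat 1" using assms unfolding invertible_def .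
  hence "h ** matrix_inv h = mat 1 \<and> matrix_inv h ** h = mat 1"
    unfolding matrix_inv_def by (rule someI_ex)
  thus "h ** matrix_inv h = mat 1" "matrix_inv h ** h = mat 1" by auto
qed

lemma det_ker: assumes "det (A::real^'n^'n) = 0" obtains x where "x \<noteq> 0" "A *v x = 0"
proof -
  have "\<not> invertible A" using assms invertible_det_nz by auto
  hence "\<not> (\<forall>x. A *v x = 0 \<longrightarrow> x = 0)"
    using invertible_left_inverse matrix_left_invertible_ker by metis
  thus ?thesis using that by auto
qed

lemma orth_eig: assumes "orthogonal_matrix (Q::real^3^3)"
  shows "det (Q - det Q *\<^sub>R mat 1) = 0"
proof -
  define d where "d = det Q"
  have d: "d = 1 \<or> d = -1" using det_orthogonal_matrix[OF assms] d_def by auto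
  have dd: "d * d = 1" using d by auto
  have QT: "Q ** Finite_Cartesian_Product.transpose Q = mat 1"
    using assms unfolding orthogonal_matrix_def by auto
  have QTv: "Q *v (Finite_Cartesian_Product.transpose Q *v x) = x" for x
    by (simp only: matrix_vector_mul_assoc QT matrix_vector_mul_lid)
  have e1: "Q - d *\<^sub>R mat 1 = Q ** (mat 1 - d *\<^sub>R Finite_Cartesian_Product.transpose Q)"
    unfolding matrix_eq
    by (simp only: matrix_vector_mult_diff_rdistrib matrix_vector_mul_assoc[symmetric]
        scaleR_matrix_vector_assoc[symmetric] matrix_vector_mult_scaleR
        matrix_vector_mult_diff_distrib QTv matrix_vector_mul_lid, simp)
  have e2: "mat 1 - d *\<^sub>R Finite_Cartesian_Product.transpose Q
      = Finite_Cartesian_Product.transpose ((-d) *\<^sub>R (Q - d *\<^sub>R mat 1))"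
    by (simp add: vec_eq_iff transpose_def mat_def algebra_simps dd)
  have e3: "det (mat 1 - d *\<^sub>R Finite_Cartesian_Product.transpose Q) = (-d)^3 * det (Q - d *\<^sub>R mat 1)"
    by (simp only: e2 det_transpose det_scale3)
  have "det (Q - d *\<^sub>R mat 1) = d * ((-d)^3 * det (Q - d *\<^sub>R mat 1))"
    by (subst e1, simp only: det_mul e3 d_def[symmetric])
  also have "\<dots> = - det (Q - d *\<^sub>R mat 1)" using d by auto
  finally show ?thesis unfolding d_def by simp
qed

lemma rat_cube_int: assumes "(x::real) \<in> \<rat>" "x^3 \<in> \<int>" shows "x \<in> \<int>"
proof -
  obtain a b :: int where ab: "0 < b" "coprime a b" "x = of_int a / of_int b"
    using Rats_cases'[OF assms(1)] by metis
  obtain n :: int where n: "x^3 = of_int n" using assms(2) Ints_cases by metis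
  have "real_of_int (a^3) = of_int n * of_int (b^3)"
    using n ab by (simp add: power_divide field_simps)
  hence "a^3 = n * b^3" by (metis of_int_eq_iff of_int_mult)
  hence "b dvd a^3" by simp
  moreover have "coprime (a^3) b" using ab(2) by simp
  ultimately have "is_unit b" by (meson coprime_common_divisor dvd_refl)
  hence "b = 1" using ab(1) by simp
  thus ?thesis using ab by simp
qed

definition tr3 :: "real^3^3 \<Rightarrow> real" where "tr3 M = M$1$1+M$2$2+M$3$3"
definition c2 :: "real^3^3 \<Rightarrow> real" where "c2 M = M$1$1*M$2$2 - M$1$2*M$2$1 + M$1$1*M$3$3 - M$1$3*M$3$1 + M$2$2*M$3$3 - M$2$3*M$3$2"

lemma charpoly3: "det (mat x - M) = x^3 - tr3 M * x^2 + c2 M * x - det (M::real^3^3)"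
  unfolding det_3 tr3_def c2_def by (simp add: mat_def algebra_simps power2_eq_square power3_eq_cube)

lemma CH3: "M ** M ** M = tr3 M *\<^sub>R (M ** M) - c2 M *\<^sub>R M + det (M::real^3^3) *\<^sub>R mat 1"
  unfolding det_3 tr3_def c2_def
  by (simp add: vec_eq_iff forall_3 matrix_matrix_mult_def sum_3 mat_def; algebra)

lemma Ints_det: assumes "int_matrix M" shows "det M \<in> \<int>" "tr3 M \<in> \<int>" "c2 M \<in> \<int>"
  using assms unfolding int_matrix_def det_3 tr3_def c2_def by (auto intro!: Ints_add Ints_mult Ints_diff)

lemma mat_scale: "mat r = r *\<^sub>R (mat 1 :: real^'n^'n)"
  by (simp add: vec_eq_iff mat_def)

lemma mat_vec: "mat r *v x = r *\<^sub>R (x::real^'n)"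
  by (simp add: mat_scale[of r] scaleR_matrix_vector_assoc[symmetric])

lemma det_conj: assumes "invertible (h::real^'n^'n)" shows "det (matrix_inv h ** X ** h) = det X"
proof -
  have "det (matrix_inv h ** X ** h) = det X * (det (matrix_inv h) * det h)"
    by (simp add: det_mul)
  also have "det (matrix_inv h) * det h = 1"
    using minv(2)[OF assms] det_mul det_I by metis
  finally show ?thesis by simp
qed

lemma conj_sub: assumes "invertible (h::real^'n^'n)"
  shows "matrix_inv h ** (mat r - A) ** h = mat r - matrix_inv h ** A ** h"
  unfolding matrix_eq
proof
  fix x
  have "matrix_inv h *v (h *v x) = x"
    by (simp add: matrix_vector_mul_assoc minv[OF assms])
  thus "(matrix_inv h ** (mat r - A) ** h) *v x = (mat r - matrix_inv h ** A ** h) *v x"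
    by (simp add: matrix_vector_mul_assoc[symmetric] matrix_vector_mult_diff_rdistrib
        matrix_vector_mult_diff_distrib mat_vec matrix_vector_mult_scaleR)
qed

lemma ceig: "complex_eigenvalue M (complex_of_real r) \<longleftrightarrow> det (mat r - M) = 0"
proof -
  have "det (mat (complex_of_real r) - map_matrix complex_of_real M) = complex_of_real (det (mat r - M))"
    unfolding det_3 by (simp add: mat_def)
  thus ?thesis unfolding complex_eigenvalue_def by simp
qed

lemma sim_lemma:
  fixes M :: "real^3^3"
  assumes CH: "M ** M ** M = e *\<^sub>R mat 1" and r3: "r^3 = e" and r0: "r \<noteq> 0"
    and eig: "det (mat r - M) = 0" and tr: "tr3 M = 0"
  shows "similar_over_reals M (comp_matrix e)"
proof -
  define f where "f x = M *v x" for x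
  have fadd: "f (x + y) = f x + f y" for x y by (simp add: f_def matrix_vector_right_distrib)
  have fdiff: "f (x - y) = f x - f y" for x y by (simp add: f_def matrix_vector_mult_diff_distrib)
  have fsc: "f (k *\<^sub>R x) = k *\<^sub>R f x" for k x by (simp add: f_def matrix_vector_mult_scaleR)
  have f0: "f 0 = 0" by (simp add: f_def)
  have f3: "f (f (f x)) = r^3 *\<^sub>R x" for x
  proof -
    have "f (f (f x)) = (M ** M ** M) *v x" by (simp add: f_def matrix_vector_mul_assoc matrix_mul_assoc)
    thus ?thesis by (simp add: CH r3 scaleR_matrix_vector_assoc[symmetric])
  qed
  obtain u where u0: "u \<noteq> 0" and uk: "(mat r - M) *v u = 0" using det_ker[OF eig] by blast
  have fu: "f u = r *\<^sub>R u" using uk by (simp add: f_def matrix_vector_mult_diff_rdistrib mat_vec)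
  have "M \<noteq> mat r"
  proof
    assume "M = mat r"
    hence "tr3 M = 3 * r" by (simp add: tr3_def mat_def)
    thus False using tr r0 by simp
  qed
  then obtain y where y: "f y \<noteq> r *\<^sub>R y"
    unfolding matrix_eq f_def mat_vec by auto
  define w where "w = f y - r *\<^sub>R y"
  have w0: "w \<noteq> 0" using y w_def by simp
  have Nw: "f (f w) + r *\<^sub>R f w + r^2 *\<^sub>R w = 0"
    unfolding w_def by (simp add: fdiff fsc f3 algebra_simps power2_eq_square power3_eq_cube)
  have nreal: "f w \<noteq> t *\<^sub>R w" for t
  proof
    assume ft: "f w = t *\<^sub>R w"
    have "f (f w) = (t*t) *\<^sub>R w" using ft fsc by simp
    hence "(t^2 + r*t + r^2) *\<^sub>R w = 0" using Nw ft
      by (simp add: scaleR_add_left power2_eq_square)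
    moreover have "t^2 + r*t + r^2 > 0"
    proof -
      have "t^2 + r*t + r^2 = (t + r/2)^2 + 3/4 * r^2" by (simp add: power2_eq_square algebra_simps)
      moreover have "r^2 > 0" using r0 by simp
      moreover have "(t + r/2)^2 \<ge> 0" by simp
      ultimately show ?thesis by linarith
    qed
    ultimately show False using w0 by simp
  qed
  define N where "N z = f (f z) + r *\<^sub>R f z + r^2 *\<^sub>R z" for z
  have Nlin: "N (a *\<^sub>R x + b *\<^sub>R y + c *\<^sub>R z) = a *\<^sub>R N x + b *\<^sub>R N y + c *\<^sub>R N z" for a b c x y z
    unfolding N_def by (simp add: fadd fsc algebra_simps)
  have Nu: "N u = (3 * r^2) *\<^sub>R u"
  proof -
    have "(3*r^2) *\<^sub>R u = (r*r + r*r + r*r) *\<^sub>R u"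
      by (rule arg_cong[where f="\<lambda>k. k *\<^sub>R u"]) (simp add: power2_eq_square)
    also have "\<dots> = (r*r) *\<^sub>R u + (r*r) *\<^sub>R u + (r*r) *\<^sub>R u" by (simp only: scaleR_add_left)
    also have "\<dots> = N u" by (simp add: N_def fu fsc power2_eq_square)
    finally show ?thesis by simp
  qed
  have Nw0: "N w = 0" using Nw N_def by simp
  have Nfw: "N (f w) = 0" using Nw unfolding N_def
    by (metis f0 fadd fsc)
  define v where "v = u + w"
  have ffw: "f (f w) = - r *\<^sub>R f w - r^2 *\<^sub>R w" using Nw by (simp add: algebra_simps eq_neg_iff_add_eq_0)
  have fv: "f v = r *\<^sub>R u + f w" by (simp add: v_def fadd fu)
  have ffv: "f (f v) = r^2 *\<^sub>R u - r *\<^sub>R f w - r^2 *\<^sub>R w"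
    by (simp add: fv fadd fsc fu ffw power2_eq_square)
  define P :: "real^3^3" where "P = (\<chi> i j. if j = 1 then v$i else if j = 2 then f v $ i else f (f v) $ i)"
  have Px: "P *v x = x$1 *\<^sub>R v + x$2 *\<^sub>R f v + x$3 *\<^sub>R f (f v)" for x
    by (simp add: vec_eq_iff P_def matrix_vector_mult_def sum_3 algebra_simps)
  have Pinj: "x = 0" if Px0: "P *v x = 0" for x
  proof -
    define a where "a = x$1"
    define b where "b = x$2"
    define g where "g = x$3"
    define \<kappa> where "\<kappa> = a + b * r + g * r^2"
    have E: "\<kappa> *\<^sub>R u + (a - g * r^2) *\<^sub>R w + (b - g * r) *\<^sub>R f w = 0"
    proof -
      have "P *v x = \<kappa> *\<^sub>R u + (a - g * r^2) *\<^sub>R w + (b - g * r) *\<^sub>R f w"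
        unfolding Px ffv unfolding fv by (simp add: v_def \<kappa>_def a_def b_def g_def algebra_simps)
      thus ?thesis using Px0 by simp
    qed
    have "N (\<kappa> *\<^sub>R u + (a - g * r^2) *\<^sub>R w + (b - g * r) *\<^sub>R f w) = (\<kappa> * (3 * r^2)) *\<^sub>R u"
      unfolding Nlin Nu Nw0 Nfw by simp
    moreover have "N 0 = 0" unfolding N_def by (simp add: f0)
    ultimately have "(\<kappa> * (3 * r^2)) *\<^sub>R u = 0" using E by simp
    hence k0: "\<kappa> = 0" using u0 r0 by simp
    hence E2: "(a - g * r^2) *\<^sub>R w + (b - g * r) *\<^sub>R f w = 0" using E by simp
    have b: "b = g * r"
    proof (rule ccontr)
      assume ne: "b \<noteq> g * r"
      have E3: "(b - g * r) *\<^sub>R f w = - ((a - g * r^2) *\<^sub>R w)"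
        using E2 by (simp add: eq_neg_iff_add_eq_0 add.commute)
      have "f w = (1 / (b - g * r)) *\<^sub>R ((b - g * r) *\<^sub>R f w)" using ne by simp
      also have "\<dots> = ((1 / (b - g * r)) * (- (a - g * r^2))) *\<^sub>R w"
        unfolding E3 scaleR_minus_left[symmetric] scaleR_scaleR by (rule refl)
      finally have "f w = ((1 / (b - g * r)) * (- (a - g * r^2))) *\<^sub>R w" .
      thus False using nreal by blast
    qed
    hence "(a - g * r^2) *\<^sub>R w = 0" using E2 by simp
    hence a: "a = g * r^2" using w0 by simp
    have "3 * g * r^2 = 0" using k0 a b \<kappa>_def by (simp add: power2_eq_square)
    hence "g = 0" using r0 by simp
    thus ?thesis using a b by (simp add: vec_eq_iff forall_3 a_def b_def g_def)
  qed
  have Pinv: "invertible P"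
    using Pinj invertible_left_inverse matrix_left_invertible_ker by metis
  have Cx: "comp_matrix e *v x = vector [e * x$3, x$1, x$2]" for x
    by (simp add: vec_eq_iff forall_3 comp_matrix_def matrix_vector_mult_def sum_3 vector_3)
  have MP: "M ** P = P ** comp_matrix e"
    unfolding matrix_eq
  proof
    fix x
    have "(M ** P) *v x = f (P *v x)" by (simp add: f_def matrix_vector_mul_assoc)
    also have "\<dots> = x$1 *\<^sub>R f v + x$2 *\<^sub>R f (f v) + (x$3 * e) *\<^sub>R v"
      by (simp add: Px fadd fsc f3 r3)
    also have "\<dots> = P *v (comp_matrix e *v x)"
      by (simp add: Px Cx vector_3 algebra_simps)
    also have "\<dots> = (P ** comp_matrix e) *v x" by (simp add: matrix_vector_mul_assoc)
    finally show "(M ** P) *v x = (P ** comp_matrix e) *v x" .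
  qed
  have "M = M ** (P ** matrix_inv P)" by (simp add: minv[OF Pinv])
  also have "\<dots> = P ** comp_matrix e ** matrix_inv P" by (simp add: matrix_mul_assoc MP)
  finally show ?thesis unfolding similar_over_reals_def using Pinv by blast
qed

theorem theorem2p3:
  fixes M :: "real^3^3" and T :: "(real^3) set" and m :: int
  assumes "int_matrix M"
    and "expanding M"
    and "m = \<lfloor>\<bar>det M\<bar>\<rfloor>"
    and "self_affine_lattice_tile M T"
    and "conjugate_to_self_similar M T"
  shows "((\<exists>k::int. m = k ^ 3) \<and> m \<ge> 8) \<or>
         (\<exists>s::real. s \<in> {1, -1} \<and> similar_over_reals M (comp_matrix (s * of_int m)))"
proof -
  obtain h Q :: "real^3^3" and c :: real where h: "invertible h" and c: "c > 0" and Q: "orthogonal_matrix Q"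
    and hM: "h ** M ** matrix_inv h = c *\<^sub>R Q"
    using assms(5) unfolding conjugate_to_self_similar_def by (elim exE conjE) (rule that)
  define A where "A = c *\<^sub>R Q"
  have MA: "M = matrix_inv h ** A ** h"
  proof -
    have "matrix_inv h ** (h ** M ** matrix_inv h) ** h = (matrix_inv h ** h) ** M ** (matrix_inv h ** h)"
      by (simp only: matrix_mul_assoc)
    also have "\<dots> = M" by (simp add: minv[OF h])
    finally show ?thesis using hM A_def by simp
  qed
  define d where "d = det Q"
  have d: "d = 1 \<or> d = -1" using det_orthogonal_matrix[OF Q] d_def by auto
  define r where "r = c * d"
  have "mat r - A = (-c) *\<^sub>R (Q - d *\<^sub>R mat 1)"
    by (simp add: vec_eq_iff mat_def algebra_simps A_def r_def)
  hence detA0: "det (mat r - A) = 0" using orth_eig[OF Q] by (simp only: det_scale3 d_def mult_zero_right)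
  have detM: "det M = c^3 * d" using det_conj[OF h, of A] MA by (simp add: A_def det_scale3 d_def)
  have r3: "r^3 = det M" using d detM by (auto simp: r_def power_mult_distrib)
  have eig: "det (mat r - M) = 0"
    using conj_sub[OF h, of r A] MA det_conj[OF h, of "mat r - A"] detA0 by simp
  have r1: "\<bar>r\<bar> > 1"
    using assms(2) eig ceig[of M r] unfolding expanding_def by auto
  hence r0: "r \<noteq> 0" by auto
  have cp: "r^3 - tr3 M * r^2 + c2 M * r - det M = 0" using eig charpoly3[of r M] by simp
  hence "r * (c2 M - tr3 M * r) = 0" using r3 by (simp add: algebra_simps power2_eq_square power3_eq_cube)
  hence c2r: "c2 M = tr3 M * r" using r0 by simp
  obtain n :: int where n: "det M = of_int n" using Ints_det(1)[OF assms(1)] Ints_cases by metis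
  have mn: "m = \<bar>n\<bar>" using assms(3) n by (simp only: of_int_abs[symmetric] floor_of_int)
  show ?thesis
  proof (cases "tr3 M = 0")
    case False
    have "r = c2 M / tr3 M" using c2r False by simp
    moreover have "c2 M \<in> \<rat>" "tr3 M \<in> \<rat>" using Ints_det[OF assms(1)] Ints_subset_Rats by auto
    ultimately have "r \<in> \<rat>" by simp
    moreover have "r^3 \<in> \<int>" using r3 Ints_det(1)[OF assms(1)] by simp
    ultimately have "r \<in> \<int>" by (rule rat_cube_int)
    then obtain k0 :: int where k0: "r = of_int k0" using Ints_cases by metis
    have "of_int n = (of_int k0 :: real)^3" using r3 n k0 by simp
    hence "n = k0^3" by (metis of_int_eq_iff of_int_power)
    hence mk: "m = \<bar>k0\<bar>^3" using mn by (simp add: power_abs)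
    have "\<bar>k0\<bar> \<ge> 2" using r1 k0 by linarith
    hence "\<bar>k0\<bar>^3 \<ge> 2^3" by (rule power_mono) simp
    hence "m \<ge> 8" using mk by simp
    thus ?thesis using mk by blast
  next
    case True
    hence "c2 M = 0" using c2r by simp
    hence CH: "M ** M ** M = det M *\<^sub>R mat 1" using CH3[of M] True by simp
    have sim: "similar_over_reals M (comp_matrix (det M))"
      by (rule sim_lemma[OF CH r3 r0 eig True])
    have n0: "n \<noteq> 0" using r3 r0 n by auto
    define s where "s = (if n > 0 then 1 else -1 :: real)"
    have "s * of_int m = det M" using n0 mn n by (auto simp: s_def)
    moreover have "s \<in> {1, -1}" by (simp add: s_def)
    ultimately show ?thesis using sim by auto
  qed
qed
end
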